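(* Suppose Assumption A holds with constant $d$, and that there is a constant $L^\circ\in[1,\infty)$ (depending on $\theta^\circ,\lambda,\eta$) such that $\sup_{0<\epsilon<1}\epsilon\,m^\circ_\epsilon\Lambda_{(m^\circ_\epsilon)}/\Phi^\circ_\epsilon\le L^\circ$. If moreover $m^\circ_\epsilon\to\infty$ as $\epsilon\to0$, then with $K^\circ:=10((1+d^{-1})\vee d^{-2}\|\theta^\circ-\eta\|^2)L^\circ$, $$\lim_{\epsilon\to0}\mathbb E_{\theta^\circ}P_{\vartheta^{m^\circ_\epsilon}|Y}\Big((K^\circ)^{-1}\Phi^\circ_\epsilon\le\|\vartheta^{m^\circ_\epsilon}-\theta^\circ\|^2\le K^\circ\Phi^\circ_\epsilon\Big)=1.$$
   Context: Let $\ell^2$ be the space of square-summable real sequences with norm $\|\cdot\|$. Fix a bounded real sequence $\lambda=(\lambda_j)_{j\ge1}$ with $\lambda_j\ne0$ for all $j$, a noise level $\epsilon\in(0,1)$ and a true parameter $\theta^\circ\in\ell^2$. The data $Y=(Y_j)_{j\ge1}$ satisfy $Y_j=\lambda_j\theta^\circ_j+\sqrt\epsilon\,\xi_j$ with $\xi_j$ i.i.d. $N(0,1)$; $\mathbb E_{\theta^\circ}$, $P_{\theta^\circ}$ denote expectation and probability under this law. Fix prior means $\eta=(\eta_j)_{j\ge1}$ with $\theta^\circ-\eta\in\ell^2$ and prior variances $\tau_j\in(0,\infty)$ (possibly depending on $\epsilon$). For $m\in\mathbb N$ the sieve prior $P_{\vartheta^m}$ is the law of $\vartheta^m=(\vartheta^m_j)_{j\ge1}$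 with independent coordinates, $\vartheta^m_j\sim N(\eta_j,\tau_j)$ for $j\le m$ and $\vartheta^m_j=\eta_j$ a.s. for $j>m$, in the model $Y_j=\lambda_j\vartheta^m_j+\sqrt\epsilon\xi_j$ with $\vartheta^m$ independent of $(\xi_j)$. Put $\sigma_j:=(\lambda_j^2\epsilon^{-1}+\tau_j^{-1})^{-1}$ and $\theta^Y_j:=\sigma_j(\tau_j^{-1}\eta_j+\lambda_j\epsilon^{-1}Y_j)$. The posterior $P_{\vartheta^m|Y}$ makes the coordinates independent with $\vartheta^m_j\sim N(\theta^Y_j,\sigma_j)$ for $j\le m$ and $\vartheta^m_j=\eta_j$ for $j>m$; the Bayes estimator is $\hat\theta^m:=\mathbb E[\vartheta^m|Y]$. Define $b_m:=\sum_{j>m}(\theta^\circ_j-\eta_j)^2$. Let $\Lambda_j:=\lambda_j^{-2}$, $\Lambda_{(m)}:=\max_{1\le j\le m}\Lambda_j$, $\bar\Lambda_m:=m^{-1}\sum_{j=1}^m\Lambda_j$ and $\Phi^m_\epsilon:=b_m\vee\epsilon m\bar\Lambda_m$. Let $G_\epsilon:=\max\{1\le m\le\lfloor\epsilon^{-1}\rfloor:\epsilon\Lambda_{(m)}\le\Lambda_1\}$. Assumption A: there is a constant $d>0$ such that $\tau_j\ge d\,(\epsilon^{1/2}\Lambda_j^{1/2}\vee\epsilon\Lambda_j)$ for all $1\le j\le G_\epsilon$ and all $\epsilon\in(0,1)$. Oracle quantities: $m^\circ_\epsilon:=\min\{m\ge1:\Phi^m_\epsilon\le\Phi^k_\epsilon\text{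 for all }k\ge1\}$ and $\Phi^\circ_\epsilon:=\Phi^{m^\circ_\epsilon}_\epsilon=\min_{m\ge1}\Phi^m_\epsilon$. *)

theory Defs
  imports "HOL-Probability.Probability"
begin

text \<open>Indexing convention: sequences are nat-indexed starting at 0; coordinate i
  corresponds to the paper's coordinate j = i + 1.\<close>

definition Lam :: "(nat \<Rightarrow> real) \<Rightarrow> nat \<Rightarrow> real" where
  "Lam lam i = 1 / (lam i)\<^sup>2"

definition LamMax :: "(nat \<Rightarrow> real) \<Rightarrow> nat \<Rightarrow> real" where
  "LamMax lam m = Max (Lam lam ` {..<m})"

definition LamBar :: "(nat \<Rightarrow> real) \<Rightarrow> nat \<Rightarrow> real" where
  "LamBar lam m = (\<Sum>i<m. Lam lam i) / real m"

definition sqnorm :: "(nat \<Rightarrow> real) \<Rightarrow> real" where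
  "sqnorm x = (\<Sum>i. (x i)\<^sup>2)"

text \<open>b_m = sum over paper-indices j > m, i.e. 0-based indices i >= m.\<close>
definition bias :: "(nat \<Rightarrow> real) \<Rightarrow> (nat \<Rightarrow> real) \<Rightarrow> nat \<Rightarrow> real" where
  "bias th eta m = (\<Sum>i. (th (i + m) - eta (i + m))\<^sup>2)"

definition Phi :: "(nat \<Rightarrow> real) \<Rightarrow> (nat \<Rightarrow> real) \<Rightarrow> (nat \<Rightarrow> real) \<Rightarrow> real \<Rightarrow> nat \<Rightarrow> real" where
  "Phi lam th eta eps m = max (bias th eta m) (eps * real m * LamBar lam m)"

definition oracle_dim :: "(nat \<Rightarrow> real) \<Rightarrow> (nat \<Rightarrow> real) \<Rightarrow> (nat \<Rightarrow> real) \<Rightarrow> real \<Rightarrow> nat" where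
  "oracle_dim lam th eta eps =
     (LEAST m. 1 \<le> m \<and> (\<forall>k\<ge>1. Phi lam th eta eps m \<le> Phi lam th eta eps k))"

definition oracle_rate :: "(nat \<Rightarrow> real) \<Rightarrow> (nat \<Rightarrow> real) \<Rightarrow> (nat \<Rightarrow> real) \<Rightarrow> real \<Rightarrow> real" where
  "oracle_rate lam th eta eps = Phi lam th eta eps (oracle_dim lam th eta eps)"

definition G_eps :: "(nat \<Rightarrow> real) \<Rightarrow> real \<Rightarrow> nat" where
  "G_eps lam eps = Max {m. 1 \<le> m \<and> m \<le> nat \<lfloor>1 / eps\<rfloor> \<and> eps * LamMax lam m \<le> Lam lam 0}"

definition post_var :: "(nat \<Rightarrow> real) \<Rightarrow> (nat \<Rightarrow> real) \<Rightarrow> real \<Rightarrow> nat \<Rightarrow> real" where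
  "post_var lam tau eps i = 1 / ((lam i)\<^sup>2 / eps + 1 / tau i)"

definition post_mean :: "(nat \<Rightarrow> real) \<Rightarrow> (nat \<Rightarrow> real) \<Rightarrow> (nat \<Rightarrow> real) \<Rightarrow> real \<Rightarrow> (nat \<Rightarrow> real) \<Rightarrow> nat \<Rightarrow> real" where
  "post_mean lam tau eta eps Y i = post_var lam tau eps i * (eta i / tau i + lam i * Y i / eps)"

text \<open>Posterior law of the sieve prior vartheta^m given data Y: independent coordinates,
  N(theta^Y_j, sigma_j) for paper-index j <= m (0-based i < m), and point mass at eta_j otherwise.\<close>
definition posterior :: "(nat \<Rightarrow> real) \<Rightarrow> (nat \<Rightarrow> real) \<Rightarrow> (nat \<Rightarrow> real) \<Rightarrow> real \<Rightarrow> nat \<Rightarrow> (nat \<Rightarrow> real) \<Rightarrow> (nat \<Rightarrow> real) measure" where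
  "posterior lam tau eta eps m Y =
     (\<Pi>\<^sub>M i\<in>UNIV. if i < m
        then density lborel (normal_density (post_mean lam tau eta eps Y i) (sqrt (post_var lam tau eps i)))
        else return borel (eta i))"

definition data_law :: "(nat \<Rightarrow> real) \<Rightarrow> (nat \<Rightarrow> real) \<Rightarrow> real \<Rightarrow> (nat \<Rightarrow> real) measure" where
  "data_law lam th eps = (\<Pi>\<^sub>M i\<in>UNIV. density lborel (normal_density (lam i * th i) (sqrt eps)))"

definition post_conc_prob ::
  "(nat \<Rightarrow> real) \<Rightarrow> (nat \<Rightarrow> real) \<Rightarrow> (nat \<Rightarrow> real) \<Rightarrow> (nat \<Rightarrow> real) \<Rightarrow> real \<Rightarrow> nat \<Rightarrow> real \<Rightarrow> real \<Rightarrow> real" where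
  "post_conc_prob lam th eta tau eps m lo hi =
     (\<integral>Y. measure (posterior lam tau eta eps m Y)
              {v \<in> space (posterior lam tau eta eps m Y).
                 lo \<le> sqnorm (\<lambda>i. v i - th i) \<and> sqnorm (\<lambda>i. v i - th i) \<le> hi}
        \<partial>data_law lam th eps)"

end

theory Submission
  imports Defs
begin
lemma normal_poly4:
  fixes mu sg a0 a1 a2 a3 a4 :: real
  assumes sg: "0 < sg"
  shows "has_bochner_integral lborel (\<lambda>x. normal_density mu sg x *
     (a0 + a1*(x-mu) + a2*(x-mu)^2 + a3*(x-mu)^3 + a4*(x-mu)^4)) (a0 + a2 * sg^2 + 3 * a4 * sg^4)"
proof -
  have e0: "has_bochner_integral lborel (\<lambda>x. normal_density mu sg x * (x - mu)^(2*0)) 1"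
    using normal_moment_even[OF sg, of mu 0] by simp
  have e1: "has_bochner_integral lborel (\<lambda>x. normal_density mu sg x * (x - mu)^(2*1)) (sg^2)"
    using normal_moment_even[OF sg, of mu 1] by (simp add: power2_eq_square)
  have e2: "has_bochner_integral lborel (\<lambda>x. normal_density mu sg x * (x - mu)^(2*2)) (3* sg^4)"
  proof -
    have "3 * sg^4 = sg*(sg*(sg*(sg*3)))" by (simp add: eval_nat_numeral)
    then show ?thesis
    using normal_moment_even[OF sg, of mu 2] by (simp add: fact_numeral field_simps power2_eq_square)
  qed
  have o0: "has_bochner_integral lborel (\<lambda>x. normal_density mu sg x * (x - mu)^(2*0+1)) 0"
    using normal_moment_odd[OF sg, of mu 0] by simp
  have o1: "has_bochner_integral lborel (\<lambda>x. normal_density mu sg x * (x - mu)^(2*1+1)) 0"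
    using normal_moment_odd[OF sg, of mu 1] by simp
  have "has_bochner_integral lborel (\<lambda>x. a0 * (normal_density mu sg x * (x - mu)^(2*0)) +
      a1 * (normal_density mu sg x * (x - mu)^(2*0+1)) + a2 * (normal_density mu sg x * (x - mu)^(2*1))
      + a3 * (normal_density mu sg x * (x - mu)^(2*1+1)) + a4 * (normal_density mu sg x * (x - mu)^(2*2)))
     (a0 * 1 + a1 * 0 + a2 * sg^2 + a3 * 0 + a4 * (3* sg^4))"
    by (intro has_bochner_integral_add has_bochner_integral_mult_right e0 e1 e2 o0 o1)
  then show ?thesis
    by (rule has_bochner_integral_cong[THEN iffD1, rotated 3]) (auto simp: distrib_left mult_ac)
qed

lemma norm_sq_moments:
  fixes mu sg c :: real
  assumes sg: "0 < sg"
  shows "has_bochner_integral (density lborel (normal_density mu sg)) (\<lambda>x. (x-c)^2) (sg^2 + (mu-c)^2)"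
    and "has_bochner_integral (density lborel (normal_density mu sg))
            (\<lambda>x. ((x-c)^2 - (sg^2 + (mu-c)^2))^2) (2 * sg^4 + 4 * sg^2 * (mu-c)^2)"
proof -
  let ?d = "mu - c"
  have "has_bochner_integral lborel (\<lambda>x. normal_density mu sg x *
     (?d^2 + (2*?d)*(x-mu) + 1*(x-mu)^2 + 0*(x-mu)^3 + 0*(x-mu)^4)) (?d^2 + 1 * sg^2 + 3 * 0 * sg^4)"
    by (rule normal_poly4[OF sg])
  then have "has_bochner_integral lborel (\<lambda>x. normal_density mu sg x *\<^sub>R (x-c)^2) (sg^2 + (mu-c)^2)"
    by (rule has_bochner_integral_cong[THEN iffD1, rotated 3]) (auto simp: power2_eq_square algebra_simps)
  then show "has_bochner_integral (density lborel (normal_density mu sg)) (\<lambda>x. (x-c)^2) (sg^2 + (mu-c)^2)"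
    by (intro has_bochner_integral_density) (auto simp: normal_density_nonneg)
  have "has_bochner_integral lborel (\<lambda>x. normal_density mu sg x *
     (sg^4 + (- 4 * ?d * sg^2)*(x-mu) + (4 * ?d^2 - 2 * sg^2)*(x-mu)^2 + (4*?d)*(x-mu)^3 + 1*(x-mu)^4))
     (sg^4 + (4 * ?d^2 - 2 * sg^2) * sg^2 + 3 * 1 * sg^4)"
    by (rule normal_poly4[OF sg])
  then have "has_bochner_integral lborel (\<lambda>x. normal_density mu sg x *\<^sub>R ((x-c)^2 - (sg^2 + (mu-c)^2))^2)
      (2 * sg^4 + 4 * sg^2 * (mu-c)^2)"
    by (rule has_bochner_integral_cong[THEN iffD1, rotated 3])
       (auto simp: power2_eq_square power3_eq_cube eval_nat_numeral algebra_simps)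
  then show "has_bochner_integral (density lborel (normal_density mu sg))
            (\<lambda>x. ((x-c)^2 - (sg^2 + (mu-c)^2))^2) (2 * sg^4 + 4 * sg^2 * (mu-c)^2)"
    by (intro has_bochner_integral_density) (auto simp: normal_density_nonneg)
qed

lemma (in product_prob_space) PiM_integral_single:
  fixes g :: "'a \<Rightarrow> real"
  assumes "finite J" "i \<in> J" "integrable (M i) g"
  shows "integrable (PiM J M) (\<lambda>x. g (x i))" "integral\<^sup>L (PiM J M) (\<lambda>x. g (x i)) = integral\<^sup>L (M i) g"
proof -
  define f where "f k = (if k = i then g else (\<lambda>_. 1::real))" for k
  have int: "\<And>k. k \<in> J \<Longrightarrow> integrable (M k) (f k)"
    using assms by (auto simp: f_def)
  have eq: "(\<lambda>x. \<Prod>k\<in>J. f k (x k)) = (\<lambda>x. g (x i))"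
    using assms by (auto simp: f_def if_distrib[of "\<lambda>f. f _"] prod.If_cases cong: if_cong)
  show "integrable (PiM J M) (\<lambda>x. g (x i))"
    using product_integrable_prod[OF assms(1) int] eq by simp
  have "integral\<^sup>L (PiM J M) (\<lambda>x. g (x i)) = (\<Prod>k\<in>J. integral\<^sup>L (M k) (f k))"
    using product_integral_prod[OF assms(1) int] eq by simp
  also have "\<dots> = integral\<^sup>L (M i) g"
    using assms by (simp add: f_def if_distrib[of "\<lambda>f. integral\<^sup>L _ f"] prod.If_cases M.prob_space cong: if_cong)
  finally show "integral\<^sup>L (PiM J M) (\<lambda>x. g (x i)) = integral\<^sup>L (M i) g" .
qed

lemma (in product_prob_space) PiM_integral_pair:
  fixes g h :: "'a \<Rightarrow> real"
  assumes "finite J" "i \<in> J" "j \<in> J" "i \<noteq> j" "integrable (M i) g" "integrable (M j) h"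
  shows "integrable (PiM J M) (\<lambda>x. g (x i) * h (x j))"
    "integral\<^sup>L (PiM J M) (\<lambda>x. g (x i) * h (x j)) = integral\<^sup>L (M i) g * integral\<^sup>L (M j) h"
proof -
  define f where "f k = (if k = i then g else if k = j then h else (\<lambda>_. 1::real))" for k
  have int: "\<And>k. k \<in> J \<Longrightarrow> integrable (M k) (f k)"
    using assms by (auto simp: f_def)
  have pj: "(\<Prod>k\<in>J. F k) = F i * F j * (\<Prod>k\<in>J-{i,j}. F k)" for F :: "'i \<Rightarrow> real"
  proof -
    have "(\<Prod>k\<in>J. F k) = F i * (\<Prod>k\<in>J-{i}. F k)"
      using assms by (simp add: prod.remove)
    also have "(\<Prod>k\<in>J-{i}. F k) = F j * (\<Prod>k\<in>J-{i}-{j}. F k)"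
      using assms by (subst prod.remove[of _ j]) auto
    finally show ?thesis by (simp add: Diff_insert2[symmetric] insert_commute mult.assoc)
  qed
  have eq: "(\<lambda>x. \<Prod>k\<in>J. f k (x k)) = (\<lambda>x. g (x i) * h (x j))"
    using assms by (auto simp: pj f_def intro!: prod.neutral)
  show "integrable (PiM J M) (\<lambda>x. g (x i) * h (x j))"
    using product_integrable_prod[OF assms(1) int] eq by simp
  have "integral\<^sup>L (PiM J M) (\<lambda>x. g (x i) * h (x j)) = (\<Prod>k\<in>J. integral\<^sup>L (M k) (f k))"
    using product_integral_prod[OF assms(1) int] eq by simp
  also have "\<dots> = integral\<^sup>L (M i) g * integral\<^sup>L (M j) h"
    using assms by (subst pj) (auto simp: f_def M.prob_space intro!: prod.neutral)
  finally show "integral\<^sup>L (PiM J M) (\<lambda>x. g (x i) * h (x j)) = integral\<^sup>L (M i) g * integral\<^sup>L (M j) h" .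
qed

lemma GC_fin:
  fixes M :: "nat \<Rightarrow> real measure" and mu sg w c :: "nat \<Rightarrow> real" and t :: real and m :: nat
  assumes prob: "\<And>i. prob_space (M i)"
    and Mi: "\<And>i. i < m \<Longrightarrow> M i = density lborel (normal_density (mu i) (sg i))"
    and sg: "\<And>i. i < m \<Longrightarrow> 0 < sg i" and t: "0 < t"
  shows "measure (PiM {..<m} M) {x \<in> space (PiM {..<m} M).
            t \<le> \<bar>(\<Sum>i<m. w i * (x i - c i)^2) - (\<Sum>i<m. w i * ((sg i)^2 + (mu i - c i)^2))\<bar>}
         \<le> (\<Sum>i<m. (w i)^2 * (2 * (sg i)^4 + 4 * (sg i)^2 * (mu i - c i)^2)) / t^2"
proof -
  interpret P: product_prob_space M "{..<m}" by (rule product_prob_spaceI[OF prob])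
  define Y where "Y i x = (x - c i)^2 - ((sg i)^2 + (mu i - c i)^2)" for i x
  define V where "V i = 2 * (sg i)^4 + 4 * (sg i)^2 * (mu i - c i)^2" for i
  define Z where "Z x = (\<Sum>i<m. w i * Y i (x i))" for x
  have ZS: "(\<Sum>i<m. w i * (x i - c i)^2) - (\<Sum>i<m. w i * ((sg i)^2 + (mu i - c i)^2)) = Z x" for x
    by (simp add: Z_def Y_def sum_subtractf[symmetric] right_diff_distrib)
  have hY1: "has_bochner_integral (M i) (Y i) 0" if "i < m" for i
  proof -
    have cst: "has_bochner_integral (M i) (\<lambda>_. (sg i)^2 + (mu i - c i)^2) ((sg i)^2 + (mu i - c i)^2)"
      by (simp add: has_bochner_integral_iff prob_space.prob_space[OF prob])
    have "has_bochner_integral (M i) (\<lambda>x. (x - c i)^2 - ((sg i)^2 + (mu i - c i)^2))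
           (((sg i)^2 + (mu i - c i)^2) - ((sg i)^2 + (mu i - c i)^2))"
      using norm_sq_moments(1)[OF sg[OF that], of "mu i" "c i"] Mi[OF that]
      by (intro has_bochner_integral_diff cst) auto
    then show ?thesis by (simp add: Y_def[abs_def])
  qed
  have hY2: "has_bochner_integral (M i) (\<lambda>x. Y i x * Y i x) (V i)" if "i < m" for i
    using norm_sq_moments(2)[OF sg[OF that], of "mu i" "c i"] Mi[OF that]
    by (simp add: Y_def V_def power2_eq_square)
  have Z2: "(Z x)^2 = (\<Sum>i<m. \<Sum>j<m. w i * w j * (Y i (x i) * Y j (x j)))" for x
    by (simp add: Z_def power2_eq_square sum_product mult_ac)
  have hP: "has_bochner_integral (PiM {..<m} M) (\<lambda>x. Y i (x i) * Y j (x j)) (if i = j then V i else 0)"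
    if "i < m" "j < m" for i j
  proof (cases "i = j")
    case True
    then show ?thesis
      using P.PiM_integral_single[of "{..<m}" i "\<lambda>x. Y i x * Y i x"] hY2[OF that(1)] that
      by (simp add: has_bochner_integral_iff)
  next
    case False
    then show ?thesis
      using P.PiM_integral_pair[of "{..<m}" i j "Y i" "Y j"] hY1 that
      by (simp add: has_bochner_integral_iff)
  qed
  have hZ: "has_bochner_integral (PiM {..<m} M) (\<lambda>x. (Z x)^2)
      (\<Sum>i<m. \<Sum>j<m. w i * w j * (if i = j then V i else 0))"
    unfolding Z2
    by (intro has_bochner_integral_sum has_bochner_integral_mult_right hP) auto
  have sumV: "(\<Sum>i<m. \<Sum>j<m. w i * w j * (if i = j then V i else 0)) = (\<Sum>i<m. (w i)^2 * V i)"
    by (simp add: if_distrib[of "\<lambda>x. _ * x"] power2_eq_square cong: if_cong)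
  have set_eq: "{x \<in> space (PiM {..<m} M).
            t \<le> \<bar>(\<Sum>i<m. w i * (x i - c i)^2) - (\<Sum>i<m. w i * ((sg i)^2 + (mu i - c i)^2))\<bar>}
        = {x \<in> space (PiM {..<m} M). t^2 \<le> (Z x)^2}"
    using t by (auto simp: ZS abs_le_square_iff[symmetric])
  have "measure (PiM {..<m} M) {x \<in> space (PiM {..<m} M). t^2 \<le> (Z x)^2}
      \<le> (\<integral>x. (Z x)^2 \<partial>PiM {..<m} M) / t^2"
    using hZ t by (intro integral_Markov_inequality_measure[where A="space (PiM {..<m} M)"])
      (auto simp: has_bochner_integral_iff)
  also have "(\<integral>x. (Z x)^2 \<partial>PiM {..<m} M) = (\<Sum>i<m. (w i)^2 * V i)"
    using hZ sumV by (simp add: has_bochner_integral_iff)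
  finally show ?thesis using set_eq by (simp add: V_def)
qed

lemma GC_inf:
  fixes M :: "nat \<Rightarrow> real measure" and mu sg w c :: "nat \<Rightarrow> real" and t :: real and m :: nat
  assumes prob: "\<And>i. prob_space (M i)" and sets_M: "\<And>i. sets (M i) = sets borel"
    and Mi: "\<And>i. i < m \<Longrightarrow> M i = density lborel (normal_density (mu i) (sg i))"
    and sg: "\<And>i. i < m \<Longrightarrow> 0 < sg i" and t: "0 < t"
  shows "measure (PiM UNIV M) {x \<in> space (PiM UNIV M).
            t \<le> \<bar>(\<Sum>i<m. w i * (x i - c i)^2) - (\<Sum>i<m. w i * ((sg i)^2 + (mu i - c i)^2))\<bar>}
         \<le> (\<Sum>i<m. (w i)^2 * (2 * (sg i)^4 + 4 * (sg i)^2 * (mu i - c i)^2)) / t^2"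
proof -
  interpret P: product_prob_space M UNIV by (rule product_prob_spaceI[OF prob])
  define F where "F x = \<bar>(\<Sum>i<m. w i * (x i - c i)^2) - (\<Sum>i<m. w i * ((sg i)^2 + (mu i - c i)^2))\<bar>"
    for x :: "nat \<Rightarrow> real"
  have [measurable]: "(\<lambda>x. x i) \<in> borel_measurable (PiM J M)" if "i \<in> J" for i J
    using measurable_component_singleton[OF that, of M] measurable_cong_sets[OF refl sets_M] by blast
  have Fm: "F \<in> borel_measurable (PiM {..<m} M)"
    unfolding F_def by measurable
  have A: "{x \<in> space (PiM {..<m} M). t \<le> F x} \<in> sets (PiM {..<m} M)"
    using Fm by measurable
  have "measure (PiM UNIV M) {x \<in> space (PiM UNIV M). t \<le> F x}
      = measure (distr (PiM UNIV M) (PiM {..<m} M) (\<lambda>x. restrict x {..<m})) {x \<in> space (PiM {..<m} M). t \<le> F x}"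
    using A
    by (subst measure_distr)
       (auto intro!: arg_cong[where f="measure _"] measurable_restrict_subset simp: F_def space_PiM PiE_iff)
  also have "\<dots> = measure (PiM {..<m} M) {x \<in> space (PiM {..<m} M). t \<le> F x}"
    by (subst P.distr_PiM_restrict_finite) auto
  also have "\<dots> \<le> (\<Sum>i<m. (w i)^2 * (2 * (sg i)^4 + 4 * (sg i)^2 * (mu i - c i)^2)) / t^2"
    unfolding F_def by (rule GC_fin[OF prob Mi sg t])
  finally show ?thesis by (simp add: F_def)
qed

lemma normal_shift_emeasure:
  fixes s c :: real
  assumes s: "0 < s" and F: "F \<in> sets borel"
  shows "emeasure (density lborel (normal_density 0 s)) ((\<lambda>x. x + c) -` F)
       = emeasure (density lborel (normal_density c s)) F"
proof -
  let ?D = "density lborel (\<lambda>x. ennreal (normal_density 0 s x))"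
  interpret prob_space ?D by (rule prob_space_normal_density) (rule s)
  have "distributed ?D lborel (\<lambda>x. x) (normal_density 0 s)"
    unfolding distributed_def by (auto simp: distr_id2)
  then have "distributed ?D lborel (\<lambda>x. c + 1 * x) (normal_density (c + 1 * 0) (\<bar>1\<bar> * s))"
    by (rule normal_density_affine) (use s in auto)
  then have dd: "distr ?D lborel (\<lambda>x. c + x) = density lborel (normal_density c s)"
    by (simp add: distributed_def)
  have "emeasure (density lborel (normal_density c s)) F = emeasure (distr ?D lborel (\<lambda>x. c + x)) F"
    by (simp add: dd)
  also have "\<dots> = emeasure ?D ((\<lambda>x. c + x) -` F \<inter> space ?D)"
    using F by (intro emeasure_distr) auto
  also have "(\<lambda>x. c + x) -` F \<inter> space ?D = (\<lambda>x. x + c) -` F"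
    by (auto simp: add.commute)
  finally show ?thesis by simp
qed

lemma shift_PiM:
  fixes m :: nat and mu sg e :: "nat \<Rightarrow> real"
  assumes sg: "\<And>i. i < m \<Longrightarrow> 0 < sg i"
  shows "distr (PiM UNIV (\<lambda>i. if i < m then density lborel (normal_density 0 (sg i)) else return borel 0))
             (PiM UNIV (\<lambda>_. borel)) (\<lambda>z i. z i + (if i < m then mu i else e i))
       = PiM UNIV (\<lambda>i. if i < m then density lborel (normal_density (mu i) (sg i)) else return borel (e i))"
    (is "distr (PiM UNIV ?Nf) _ ?f = PiM UNIV ?Mf")
proof -
  let ?cc = "\<lambda>i. if i < m then mu i else e i"
  have probN: "prob_space (?Nf i)" for i
    using sg by (auto intro!: prob_space_normal_density prob_space_return)
  have probM: "prob_space (?Mf i)" for i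
    using sg by (auto intro!: prob_space_normal_density prob_space_return)
  have setsN: "sets (?Nf i) = sets borel" for i by auto
  have setsM: "sets (?Mf i) = sets borel" for i by auto
  interpret P: product_prob_space ?Mf UNIV by (rule product_prob_spaceI[OF probM])
  have fmeas: "?f \<in> measurable (PiM UNIV ?Nf) (PiM UNIV (\<lambda>_. borel))"
  proof (rule measurable_PiM_single')
    fix i :: nat
    have "(\<lambda>z. z i) \<in> measurable (PiM UNIV ?Nf) borel"
      using measurable_component_singleton[of i UNIV ?Nf] measurable_cong_sets[OF refl setsN] by blast
    then show "(\<lambda>z. z i + ?cc i) \<in> measurable (PiM UNIV ?Nf) borel" by measurable
  qed (auto simp: space_PiM)
  show ?thesis
  proof (rule P.PiM_eq)
    show "sets (distr (PiM UNIV ?Nf) (PiM UNIV (\<lambda>_. borel)) ?f) = sets (PiM UNIV ?Mf)"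
      by (simp add: sets_PiM_cong[OF refl setsM])
  next
    fix J :: "nat set" and F assume J: "finite J" "J \<subseteq> UNIV" and F: "\<And>j. j \<in> J \<Longrightarrow> F j \<in> sets (?Mf j)"
    have Fb: "F j \<in> sets borel" if "j \<in> J" for j using F[OF that] setsM by auto
    have pre: "(\<lambda>x. x + ?cc j) -` F j \<in> sets borel" if "j \<in> J" for j
      using measurable_sets[OF _ Fb[OF that], of "\<lambda>x. x + ?cc j" borel] by auto
    have Emeas: "prod_emb UNIV ?Mf J (Pi\<^sub>E J F) \<in> sets (PiM UNIV (\<lambda>_. borel))"
    proof -
      have "prod_emb UNIV ?Mf J (Pi\<^sub>E J F) \<in> sets (PiM UNIV ?Mf)"
        by (rule sets_PiM_I) (use J F in auto)
      moreover have "sets (PiM UNIV ?Mf) = sets (PiM UNIV (\<lambda>_. borel))"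
        by (rule sets_PiM_cong) auto
      ultimately show ?thesis by simp
    qed
    have "emeasure (distr (PiM UNIV ?Nf) (PiM UNIV (\<lambda>_. borel)) ?f) (prod_emb UNIV ?Mf J (Pi\<^sub>E J F))
        = emeasure (PiM UNIV ?Nf) (?f -` prod_emb UNIV ?Mf J (Pi\<^sub>E J F) \<inter> space (PiM UNIV ?Nf))"
      by (rule emeasure_distr[OF fmeas Emeas])
    also have "?f -` prod_emb UNIV ?Mf J (Pi\<^sub>E J F) \<inter> space (PiM UNIV ?Nf)
        = prod_emb UNIV ?Nf J (Pi\<^sub>E J (\<lambda>j. (\<lambda>x. x + ?cc j) -` F j))"
      by (auto simp: prod_emb_def space_PiM PiE_iff)
    also have "emeasure (PiM UNIV ?Nf) \<dots> = (\<Prod>j\<in>J. emeasure (?Nf j) ((\<lambda>x. x + ?cc j) -` F j))"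
      using J pre setsN by (intro emeasure_PiM_emb probN) auto
    also have "\<dots> = (\<Prod>j\<in>J. emeasure (?Mf j) (F j))"
    proof (intro prod.cong refl)
      fix j assume j: "j \<in> J"
      show "emeasure (?Nf j) ((\<lambda>x. x + ?cc j) -` F j) = emeasure (?Mf j) (F j)"
      proof (cases "j < m")
        case True
        then show ?thesis using normal_shift_emeasure[OF sg[OF True] Fb[OF j], of "mu j"] by simp
      next
        case False
        then show ?thesis using pre[OF j] Fb[OF j] by (simp add: indicator_def)
      qed
    qed
    finally show "emeasure (distr (PiM UNIV ?Nf) (PiM UNIV (\<lambda>_. borel)) ?f) (prod_emb UNIV ?Mf J (Pi\<^sub>E J F))
        = (\<Prod>j\<in>J. emeasure (?Mf j) (F j))" .
  qed
qed

lemma prob_lb2: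
  assumes P: "prob_space M" and G: "G \<in> sets M" and B1: "B1 \<in> sets M" and B2: "B2 \<in> sets M"
    and AE: "AE z in M. z \<notin> B1 \<longrightarrow> z \<notin> B2 \<longrightarrow> z \<in> G"
  shows "1 - measure M B1 - measure M B2 \<le> measure M G"
proof -
  interpret prob_space M by (rule P)
  have "prob (space M - G) \<le> prob (B1 \<union> B2)"
    using AE B1 B2 by (intro finite_measure_mono_AE) (auto elim!: AE_mp)
  also have "\<dots> \<le> prob B1 + prob B2" by (rule measure_Un_le[OF B1 B2])
  finally show ?thesis using prob_compl[OF G] by simp
qed

lemma sqnorm_meas:
  "(\<lambda>v. sqnorm (\<lambda>i. v i - th i)) \<in> borel_measurable (PiM UNIV (\<lambda>_. borel))"
  unfolding sqnorm_def by measurable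

lemma sqnorm_split:
  assumes s: "summable (\<lambda>i. (th i - eta i)^2)" and v: "\<And>i. m \<le> i \<Longrightarrow> v i = eta i"
  shows "sqnorm (\<lambda>i. v i - th i) = (\<Sum>i<m. (v i - th i)^2) + bias th eta m"
proof -
  have eq: "(\<lambda>i. (v (i + m) - th (i + m))^2) = (\<lambda>i. (th (i + m) - eta (i + m))^2)"
    using v by (auto simp: power2_commute)
  have "summable (\<lambda>i. (th (i + m) - eta (i + m))^2)"
    using s by (subst summable_iff_shift) 
  then have "summable (\<lambda>i. (v (i + m) - th (i + m))^2)" by (simp add: eq)
  then have sv: "summable (\<lambda>i. (v i - th i)^2)" by (subst (asm) summable_iff_shift)
  show ?thesis
    unfolding sqnorm_def bias_def
    using suminf_split_initial_segment[OF sv, of m] by (simp add: eq)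
qed

lemma bias_nonneg:
  assumes s: "summable (\<lambda>i. (th i - eta i)^2)"
  shows "0 \<le> bias th eta m"
  unfolding bias_def using s summable_iff_shift[of "\<lambda>i. (th i - eta i)^2" m]
  by (intro suminf_nonneg) auto

lemma bias_le:
  assumes s: "summable (\<lambda>i. (th i - eta i)^2)"
  shows "bias th eta m \<le> sqnorm (\<lambda>i. th i - eta i)"
  unfolding bias_def sqnorm_def using suminf_split_initial_segment[OF s, of m]
  by (simp add: sum_nonneg)

lemma partial_le_sqnorm:
  assumes s: "summable (\<lambda>i. (th i - eta i)^2)"
  shows "(\<Sum>i<m. (th i - eta i)^2) \<le> sqnorm (\<lambda>i. th i - eta i)"
  unfolding sqnorm_def using s by (intro sum_le_suminf) auto

context
  fixes lam tau :: "nat \<Rightarrow> real" and eps :: real and i :: nat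
  assumes eps: "0 < eps" and lnz: "lam i \<noteq> 0" and tp: "0 < tau i"
begin

lemma den_pos: "0 < (lam i)^2 / eps + 1 / tau i"
proof -
  have "0 < (lam i)^2 / eps" using eps lnz by simp
  moreover have "0 < 1 / tau i" using tp by simp
  ultimately show ?thesis by linarith
qed

lemma pv_pos: "0 < post_var lam tau eps i"
  using den_pos by (simp add: post_var_def)

lemma pv_inv: "post_var lam tau eps i * ((lam i)^2 / eps + 1 / tau i) = 1"
  using den_pos by (simp add: post_var_def)

lemma pv_le: "post_var lam tau eps i \<le> eps * Lam lam i"
proof -
  have l2: "0 < (lam i)^2" using lnz by simp
  have "post_var lam tau eps i = 1 / ((lam i)^2 / eps + 1 / tau i)" by (simp add: post_var_def)
  also have "\<dots> \<le> 1 / ((lam i)^2 / eps)"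
    using eps tp l2 den_pos by (intro divide_left_mono) auto
  also have "\<dots> = eps * Lam lam i" by (simp add: Lam_def)
  finally show ?thesis .
qed

lemma pv_lam: "post_var lam tau eps i * (lam i)^2 / eps \<le> 1"
proof -
  have l2: "0 < (lam i)^2" using lnz by simp
  have "post_var lam tau eps i * (lam i)^2 / eps \<le> eps * Lam lam i * (lam i)^2 / eps"
    using pv_le eps l2 by (intro divide_right_mono mult_right_mono) auto
  also have "\<dots> = 1" using eps lnz by (simp add: Lam_def)
  finally show ?thesis .
qed

lemma pv_lower:
  assumes d: "0 < d" and t: "d * (eps * Lam lam i) \<le> tau i"
  shows "eps * Lam lam i / (1 + 1 / d) \<le> post_var lam tau eps i"
proof -
  have l2: "0 < (lam i)^2" using lnz by simp
  have L: "0 < eps * Lam lam i" using eps l2 by (simp add: Lam_def)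
  have "1 / tau i \<le> 1 / (d * (eps * Lam lam i))"
    using t d L tp by (intro divide_left_mono) auto
  moreover have e1: "1/(d*(eps*Lam lam i)) = (lam i)^2/(d*eps)" using lnz by (simp add: Lam_def)
  moreover have e2: "(1+1/d)/(eps*Lam lam i) = (lam i)^2/eps + (lam i)^2/(d*eps)"
    using d eps lnz by (simp add: Lam_def field_simps)
  ultimately have "(lam i)^2 / eps + 1 / tau i \<le> (1 + 1/d) / (eps * Lam lam i)"
    by linarith
  then have "1 / ((1 + 1/d) / (eps * Lam lam i)) \<le> 1 / ((lam i)^2 / eps + 1 / tau i)"
    using eps l2 tp den_pos d L by (intro divide_left_mono) (auto intro!: mult_pos_pos divide_pos_pos add_pos_pos)
  then show ?thesis using d by (simp add: post_var_def field_simps)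
qed

lemma pv_tau:
  assumes d: "0 < d" and t: "d * (sqrt eps * sqrt (Lam lam i)) \<le> tau i"
  shows "(post_var lam tau eps i / tau i)^2 \<le> eps * Lam lam i / d^2"
proof -
  have l2: "0 < (lam i)^2" using lnz by simp
  have L: "0 < Lam lam i" using l2 by (simp add: Lam_def)
  have s: "0 < sqrt eps * sqrt (Lam lam i)" using eps L by simp
  have "post_var lam tau eps i / tau i \<le> eps * Lam lam i / (d * (sqrt eps * sqrt (Lam lam i)))"
    using pv_le pv_pos t d s tp by (intro frac_le) auto
  also have "\<dots> = sqrt eps * sqrt (Lam lam i) / d"
    using eps L d by (simp add: field_simps)
  finally have "post_var lam tau eps i / tau i \<le> sqrt eps * sqrt (Lam lam i) / d" .
  then have "(post_var lam tau eps i / tau i)^2 \<le> (sqrt eps * sqrt (Lam lam i) / d)^2"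
    using pv_pos tp by (intro power_mono) auto
  also have "\<dots> = eps * Lam lam i / d^2"
    using eps L by (simp add: power_divide power_mult_distrib)
  finally show ?thesis .
qed

end

lemma sq3: "((x::real) + y + w)^2 \<le> 3 * (x^2 + y^2 + w^2)"
proof -
  have "0 \<le> (x-y)^2 + (y-w)^2 + (x-w)^2" by simp
  then show ?thesis by (simp add: power2_eq_square algebra_simps)
qed

lemma main_bound:
  fixes lam th eta tau :: "nat \<Rightarrow> real" and eps d L Phi K :: real and m :: nat
  assumes eps: "0 < eps" and lnz: "\<And>i. lam i \<noteq> 0" and tp: "\<And>i. 0 < tau i"
    and d: "0 < d" and L: "1 \<le> L" and m: "1 \<le> m"
    and s: "summable (\<lambda>i. (th i - eta i)^2)"
    and Phi: "Phi = max (bias th eta m) (eps * real m * LamBar lam m)"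
    and LB: "eps * real m * LamMax lam m \<le> L * Phi"
    and A1: "\<And>i. i < m \<Longrightarrow> d * (sqrt eps * sqrt (Lam lam i)) \<le> tau i"
    and A2: "\<And>i. i < m \<Longrightarrow> d * (eps * Lam lam i) \<le> tau i"
    and H5: "L * sqnorm (\<lambda>i. th i - eta i) / (d^2 * real m) \<le> 1/5"
    and K: "K = 10 * max (1 + 1/d) (sqnorm (\<lambda>i. th i - eta i) / d^2) * L"
  shows "1 - (25 * L + 5 * (1 + 1/d) * L) / real m \<le> post_conc_prob lam th eta tau eps m (Phi / K) (K * Phi)
         \<and> post_conc_prob lam th eta tau eps m (Phi / K) (K * Phi) \<le> 1"
proof -
  define \<sigma> where "\<sigma> i = post_var lam tau eps i" for i
  define smax where "smax = L * Phi / real m"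
  have mpos: "0 < real m" using m by simp
  have Lampos: "0 < Lam lam i" for i using lnz[of i] by (simp add: Lam_def)
  have sig_pos: "0 < \<sigma> i" for i unfolding \<sigma>_def by (rule pv_pos[OF eps lnz tp])
  have sum_eq: "eps * real m * LamBar lam m = (\<Sum>i<m. eps * Lam lam i)"
  proof -
    have "eps * real m * LamBar lam m = eps * (\<Sum>i<m. Lam lam i)" using mpos by (simp add: LamBar_def)
    then show ?thesis by (simp add: sum_distrib_left)
  qed
  have XP: "0 < eps * real m * LamBar lam m"
    unfolding sum_eq using m eps Lampos by (intro sum_pos) (auto simp: lessThan_empty_iff)
  have b0: "0 \<le> bias th eta m" by (rule bias_nonneg[OF s])
  have Phipos: "0 < Phi" using XP Phi by simp
  have bPhi: "bias th eta m \<le> Phi" using Phi by simp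
  have Lm: "Lam lam i \<le> LamMax lam m" if "i < m" for i
    unfolding LamMax_def using that by (intro Max_ge) auto
  have smax_ge: "eps * Lam lam i \<le> smax" if "i < m" for i
  proof -
    have "eps * Lam lam i \<le> eps * LamMax lam m" using Lm[OF that] eps by simp
    also have "\<dots> = eps * real m * LamMax lam m / real m" using mpos by simp
    also have "\<dots> \<le> L * Phi / real m" using LB mpos by (intro divide_right_mono) auto
    finally show ?thesis by (simp add: smax_def)
  qed
  have sig_le: "\<sigma> i \<le> eps * Lam lam i" for i unfolding \<sigma>_def by (rule pv_le[OF eps lnz tp])
  have sig_smax: "\<sigma> i \<le> smax" if "i < m" for i using sig_le[of i] smax_ge[OF that] by linarith
  have sumsig: "(\<Sum>i<m. \<sigma> i) \<le> Phi"
  proof -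
    have "(\<Sum>i<m. \<sigma> i) \<le> (\<Sum>i<m. eps * Lam lam i)" by (intro sum_mono sig_le)
    also have "\<dots> \<le> Phi" using Phi sum_eq by simp
    finally show ?thesis .
  qed
  have sumsig2: "(\<Sum>i<m. (\<sigma> i)^2) \<le> smax * Phi"
  proof -
    have "(\<Sum>i<m. (\<sigma> i)^2) \<le> (\<Sum>i<m. smax * \<sigma> i)"
      using sig_smax sig_pos by (intro sum_mono) (simp add: power2_eq_square mult_right_mono less_imp_le)
    also have "\<dots> = smax * (\<Sum>i<m. \<sigma> i)" by (simp add: sum_distrib_left)
    also have "\<dots> \<le> smax * Phi"
      using sumsig smax_def L Phipos mpos by (intro mult_left_mono) auto
    finally show ?thesis .
  qed
  have smax_pos: "0 < smax" using L Phipos mpos by (simp add: smax_def)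
  define Nf where "Nf i = (if i < m then density lborel (normal_density 0 (sqrt (\<sigma> i))) else return borel (0::real))" for i
  define N where "N = PiM UNIV Nf"
  have probNf: "prob_space (Nf i)" for i
    using sig_pos by (auto simp: Nf_def intro!: prob_space_normal_density prob_space_return)
  have setsNf: "sets (Nf i) = sets borel" for i by (simp add: Nf_def)
  interpret NP: prob_space N unfolding N_def by (rule prob_space_PiM[OF probNf])
  define Df where "Df i = density lborel (normal_density (lam i * th i) (sqrt eps))" for i
  define DD where "DD = PiM UNIV Df"
  have DD_eq: "data_law lam th eps = DD" unfolding data_law_def DD_def Df_def by simp
  have probDf: "prob_space (Df i)" for i
    using eps by (auto simp: Df_def intro!: prob_space_normal_density)
  have setsDf: "sets (Df i) = sets borel" for i by (simp add: Df_def)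
  interpret DP: prob_space DD unfolding DD_def by (rule prob_space_PiM[OF probDf])
  have spNf: "space (Nf i) = UNIV" for i by (simp add: Nf_def)
  have spaceN: "space N = UNIV" by (simp add: N_def space_PiM spNf)
  have spaceDD: "space DD = UNIV" by (simp add: DD_def space_PiM Df_def)
  have spaceB: "space (PiM UNIV (\<lambda>_::nat. borel::real measure)) = UNIV" by (simp add: space_PiM)
  have comp_N[measurable]: "(\<lambda>z. z i) \<in> borel_measurable N" for i
    unfolding N_def using measurable_component_singleton[of i UNIV Nf] measurable_cong_sets[OF refl setsNf] by blast
  have comp_D[measurable]: "(\<lambda>z. z i) \<in> borel_measurable DD" for i
    unfolding DD_def using measurable_component_singleton[of i UNIV Df] measurable_cong_sets[OF refl setsDf] by blast
  define cc where "cc Y i = (if i < m then post_mean lam tau eta eps Y i else eta i)" for Y i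
  define shift where "shift Y z = (\<lambda>i. z i + cc Y i)" for Y z :: "nat \<Rightarrow> real"
  have post_eq: "posterior lam tau eta eps m Y = distr N (PiM UNIV (\<lambda>_. borel)) (shift Y)" for Y
    unfolding posterior_def N_def Nf_def shift_def cc_def \<sigma>_def
    using shift_PiM[of m "\<lambda>i. sqrt (post_var lam tau eps i)" "\<lambda>i. post_mean lam tau eta eps Y i" eta] sig_pos
    by (simp add: \<sigma>_def)
  have shift_meas: "shift Y \<in> measurable N (PiM UNIV (\<lambda>_. borel))" for Y
    unfolding shift_def
    by (rule measurable_PiM_single') (auto simp: spaceN)
  define Q where "Q v = (Phi / K \<le> sqnorm (\<lambda>i. v i - th i) \<and> sqnorm (\<lambda>i. v i - th i) \<le> K * Phi)" for v
  define Aset where "Aset = {v \<in> space (PiM UNIV (\<lambda>_::nat. borel::real measure)). Q v}"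
  have sqm[measurable]: "(\<lambda>v. sqnorm (\<lambda>i. v i - th i)) \<in> borel_measurable (PiM UNIV (\<lambda>_. borel))"
    by (rule sqnorm_meas)
  have Aset_sets: "Aset \<in> sets (PiM UNIV (\<lambda>_. borel))"
    unfolding Aset_def Q_def by measurable
  define f where "f Y = measure N {z \<in> space N. Q (shift Y z)}" for Y
  have f_eq: "measure (posterior lam tau eta eps m Y) {v \<in> space (posterior lam tau eta eps m Y). Q v} = f Y" for Y
  proof -
    have "{v \<in> space (posterior lam tau eta eps m Y). Q v} = Aset"
      by (simp add: post_eq Aset_def)
    then have "measure (posterior lam tau eta eps m Y) {v \<in> space (posterior lam tau eta eps m Y). Q v}
        = measure N (shift Y -` Aset \<inter> space N)"
      by (simp add: post_eq measure_distr[OF shift_meas Aset_sets])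
    also have "shift Y -` Aset \<inter> space N = {z \<in> space N. Q (shift Y z)}"
      by (auto simp: Aset_def spaceB)
    finally show ?thesis by (simp add: f_def)
  qed
  have pcp: "post_conc_prob lam th eta tau eps m (Phi / K) (K * Phi) = (\<integral>Y. f Y \<partial>DD)"
    unfolding post_conc_prob_def DD_eq using f_eq by (simp add: Q_def)
  have f_meas: "f \<in> borel_measurable DD"
  proof -
    define QQ where "QQ = {p \<in> space (DD \<Otimes>\<^sub>M N). Q (shift (fst p) (snd p))}"
    have joint: "(\<lambda>p. shift (fst p) (snd p)) \<in> measurable (DD \<Otimes>\<^sub>M N) (PiM UNIV (\<lambda>_. borel))"
      unfolding shift_def cc_def post_mean_def
      by (rule measurable_PiM_single') (auto simp: space_pair_measure spaceN spaceDD)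
    have "(\<lambda>p. shift (fst p) (snd p)) -` Aset \<inter> space (DD \<Otimes>\<^sub>M N) \<in> sets (DD \<Otimes>\<^sub>M N)"
      by (rule measurable_sets[OF joint Aset_sets])
    moreover have "(\<lambda>p. shift (fst p) (snd p)) -` Aset \<inter> space (DD \<Otimes>\<^sub>M N) = QQ"
      by (auto simp: QQ_def Aset_def spaceB)
    ultimately have QQs: "QQ \<in> sets (DD \<Otimes>\<^sub>M N)" by simp
    have "(\<lambda>Y. emeasure N (Pair Y -` QQ)) \<in> borel_measurable DD"
      by (rule NP.measurable_emeasure_Pair[OF QQs])
    then have "(\<lambda>Y. enn2real (emeasure N (Pair Y -` QQ))) \<in> borel_measurable DD"
      by measurable
    moreover have "enn2real (emeasure N (Pair Y -` QQ)) = f Y" for Y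
      by (simp add: f_def measure_def QQ_def space_pair_measure spaceN spaceDD)
    ultimately show ?thesis by simp
  qed
  have f_le1: "f Y \<le> 1" for Y unfolding f_def by (rule NP.prob_le_1)
  have f_ge0: "0 \<le> f Y" for Y unfolding f_def by simp
  define a where "a Y i = post_mean lam tau eta eps Y i - th i" for Y i
  define cdet where "cdet i = \<sigma> i * (eta i - th i) / tau i" for i
  define u where "u Y i = \<sigma> i * lam i * (Y i - lam i * th i) / eps" for Y i
  define w where "w i = (\<sigma> i * lam i / eps)^2" for i
  have a_split: "a Y i = cdet i + u Y i" for Y i
  proof -
    have inv: "\<sigma> i * ((lam i)^2 / eps + 1 / tau i) = 1" unfolding \<sigma>_def by (rule pv_inv[OF eps lnz tp])
    have "th i = th i * (\<sigma> i * ((lam i)^2 / eps + 1 / tau i))" using inv by simp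
    then have "a Y i = \<sigma> i * (eta i / tau i + lam i * Y i / eps) - th i * (\<sigma> i * ((lam i)^2 / eps + 1 / tau i))"
      by (simp add: a_def post_mean_def \<sigma>_def)
    also have "\<dots> = cdet i + u Y i"
    proof -
      have "tau i \<noteq> 0" "eps \<noteq> 0" using tp[of i] eps by auto
      then show ?thesis by (simp add: cdet_def u_def field_simps power2_eq_square)
    qed
    finally show ?thesis .
  qed
  have uw: "(u Y i)^2 = w i * (Y i - lam i * th i)^2" for Y i
    by (simp add: u_def w_def power_mult_distrib power_divide)
  have sum_cdet: "(\<Sum>i<m. (cdet i)^2) \<le> Phi / 5"
  proof -
    have "(cdet i)^2 \<le> smax / d^2 * (th i - eta i)^2" if i: "i < m" for i
    proof -
      have "(cdet i)^2 = (\<sigma> i / tau i)^2 * (th i - eta i)^2"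
        by (simp add: cdet_def power_mult_distrib power_divide power2_commute)
      also have "\<dots> \<le> (eps * Lam lam i / d^2) * (th i - eta i)^2"
        using pv_tau[where lam=lam and tau=tau and eps=eps and i=i and d=d, OF eps lnz[of i] tp[of i] d A1[OF i]] by (intro mult_right_mono) (auto simp: \<sigma>_def)
      also have "\<dots> \<le> smax / d^2 * (th i - eta i)^2"
        using smax_ge[OF i] d by (intro mult_right_mono divide_right_mono) auto
      finally show ?thesis .
    qed
    then have "(\<Sum>i<m. (cdet i)^2) \<le> (\<Sum>i<m. smax / d^2 * (th i - eta i)^2)" by (intro sum_mono) auto
    also have "\<dots> = smax / d^2 * (\<Sum>i<m. (th i - eta i)^2)" by (simp add: sum_distrib_left)
    also have "\<dots> \<le> smax / d^2 * sqnorm (\<lambda>i. th i - eta i)"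
      using partial_le_sqnorm[OF s, of m] smax_pos d by (intro mult_left_mono) auto
    also have "\<dots> = Phi * (L * sqnorm (\<lambda>i. th i - eta i) / (d^2 * real m))"
      by (simp add: smax_def mult_ac)
    also have "\<dots> \<le> Phi * (1/5)" using H5 Phipos by (intro mult_left_mono) auto
    finally show ?thesis by simp
  qed
  have sq_val: "sqnorm (\<lambda>i. shift Y z i - th i) = (\<Sum>i<m. (z i + a Y i)^2) + bias th eta m"
    if z: "\<forall>i. m \<le> i \<longrightarrow> z i = 0" for Y z
  proof -
    have "sqnorm (\<lambda>i. shift Y z i - th i) = (\<Sum>i<m. (shift Y z i - th i)^2) + bias th eta m"
      by (rule sqnorm_split[OF s]) (use z in \<open>auto simp: shift_def cc_def\<close>)
    also have "(\<Sum>i<m. (shift Y z i - th i)^2) = (\<Sum>i<m. (z i + a Y i)^2)"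
      by (intro sum.cong) (auto simp: shift_def cc_def a_def algebra_simps)
    finally show ?thesis .
  qed
  have tail: "AE z in N. \<forall>i. m \<le> i \<longrightarrow> z i = 0"
  proof (subst AE_all_countable, intro allI)
    fix i :: nat
    show "AE z in N. m \<le> i \<longrightarrow> z i = 0"
    proof (cases "m \<le> i")
      case True
      have NR: "Nf i = return borel 0" using True by (simp add: Nf_def)
      have "AE x in Nf i. x = 0" unfolding NR by (subst AE_return) auto
      then have "AE z in N. z i = 0" unfolding N_def
        by (rule AE_PiM_component[OF probNf, rotated]) simp
      then show ?thesis by simp
    qed simp
  qed
  have dd: "0 < 1 + 1/d" using d by (simp add: add_pos_pos)
  have Kge: "10 * (1 + 1/d) \<le> K"
  proof -
    have "10 * (1 + 1/d) * 1 \<le> 10 * max (1 + 1/d) (sqnorm (\<lambda>i. th i - eta i) / d^2) * L"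
      using L d dd by (intro mult_mono) (auto simp: le_max_iff_disj)
    then show ?thesis using K by simp
  qed
  have K10: "10 \<le> K"
  proof -
    have "0 < 1/d" using d by simp
    moreover have "10 * (1 + 1/d) = 10 + 10 * (1/d)" by (simp add: algebra_simps)
    ultimately show ?thesis using Kge by linarith
  qed
  have Kpos: "0 < K" using K10 by simp
  have PhiK: "Phi / K \<le> Phi / (10 * (1 + 1/d))"
    using Kge Phipos dd by (intro divide_left_mono) auto
  have sqrt2: "(sqrt (\<sigma> i))^2 = \<sigma> i" for i using sig_pos[of i] by simp
  have sqrt4: "(sqrt (\<sigma> i))^4 = (\<sigma> i)^2" for i
  proof -
    have "(sqrt (\<sigma> i))^4 = ((sqrt (\<sigma> i))^2)^2" by (simp add: power_mult[symmetric])
    then show ?thesis using sqrt2[of i] by simp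
  qed
  have Nfi: "Nf i = density lborel (normal_density 0 (sqrt (\<sigma> i)))" if "i < m" for i
    using that by (simp add: Nf_def)
  have sqrtsig: "0 < sqrt (\<sigma> i)" for i using sig_pos[of i] by simp
  define B1 where "B1 = {z \<in> space N. 2/5 * Phi \<le> \<bar>(\<Sum>i<m. (z i)^2) - (\<Sum>i<m. \<sigma> i)\<bar>}"
  have B1s: "B1 \<in> sets N" unfolding B1_def by measurable
  have mB1: "measure N B1 \<le> 25/2 * L / real m"
  proof -
    have "measure N B1 \<le> (\<Sum>i<m. 1^2 * (2 * (sqrt (\<sigma> i))^4 + 4 * (sqrt (\<sigma> i))^2 * (0 - 0)^2)) / (2/5 * Phi)^2"
      unfolding B1_def N_def
      using GC_inf[where M=Nf and m=m and mu="\<lambda>_. 0" and sg="\<lambda>i. sqrt (\<sigma> i)" and w="\<lambda>_. 1"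
          and c="\<lambda>_. 0" and t="2/5 * Phi", OF probNf setsNf Nfi sqrtsig] Phipos
      by (simp add: sqrt2)
    also have "\<dots> = 25/2 * (\<Sum>i<m. (\<sigma> i)^2) / Phi^2"
      by (simp add: sqrt4 sum_distrib_left[symmetric] power_mult_distrib field_simps)
    also have "\<dots> \<le> 25/2 * (smax * Phi) / Phi^2"
      using sumsig2 Phipos by (intro divide_right_mono mult_left_mono) auto
    also have "\<dots> = 25/2 * L / real m" using Phipos by (simp add: smax_def power2_eq_square)
    finally show ?thesis .
  qed
  define U where "U Y = (\<Sum>i<m. w i * (Y i - lam i * th i)^2)" for Y
  define B3 where "B3 = {Y \<in> space DD. 2/5 * Phi \<le> \<bar>U Y - (\<Sum>i<m. w i * eps)\<bar>}"
  have B3s: "B3 \<in> sets DD" unfolding B3_def U_def by measurable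
  have weps: "w i * eps \<le> \<sigma> i" for i
  proof -
    have "w i * eps = \<sigma> i * (\<sigma> i * (lam i)^2 / eps)"
      using eps by (simp add: w_def power_mult_distrib power_divide power2_eq_square)
    also have "\<dots> \<le> \<sigma> i * 1"
      using pv_lam[where lam=lam and tau=tau and eps=eps and i=i, OF eps lnz[of i] tp[of i]] sig_pos[of i] by (intro mult_left_mono) (auto simp: \<sigma>_def)
    finally show ?thesis by simp
  qed
  have w0: "0 \<le> w i" for i by (simp add: w_def)
  have sumweps: "(\<Sum>i<m. w i * eps) \<le> Phi"
    using sumsig weps by (meson order.trans sum_mono)
  have mB3: "measure DD B3 \<le> 25/2 * L / real m"
  proof -
    have Dfi: "Df i = density lborel (normal_density (lam i * th i) (sqrt eps))" for i by (simp add: Df_def)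
    have "measure DD B3 \<le> (\<Sum>i<m. (w i)^2 * (2 * (sqrt eps)^4 + 4 * (sqrt eps)^2 * (lam i * th i - lam i * th i)^2)) / (2/5 * Phi)^2"
      unfolding B3_def DD_def U_def
      using GC_inf[where M=Df and m=m and mu="\<lambda>i. lam i * th i" and sg="\<lambda>_. sqrt eps" and w=w
          and c="\<lambda>i. lam i * th i" and t="2/5 * Phi", OF probDf setsDf Dfi] Phipos eps
      by simp
    also have "\<dots> = 25/2 * (\<Sum>i<m. (w i * eps)^2) / Phi^2"
    proof -
      have "(sqrt eps)^4 = ((sqrt eps)^2)^2" by (simp add: power_mult[symmetric])
      then have "(sqrt eps)^4 = eps^2" using eps by simp
      then show ?thesis by (simp add: sum_distrib_left[symmetric] power_mult_distrib field_simps)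
    qed
    also have "\<dots> \<le> 25/2 * (\<Sum>i<m. (\<sigma> i)^2) / Phi^2"
      using weps w0 eps by (intro divide_right_mono mult_left_mono sum_mono power_mono) auto
    also have "\<dots> \<le> 25/2 * (smax * Phi) / Phi^2"
      using sumsig2 Phipos by (intro divide_right_mono mult_left_mono) auto
    also have "\<dots> = 25/2 * L / real m" using Phipos by (simp add: smax_def power2_eq_square)
    finally show ?thesis .
  qed
  define T where "T Y = (\<Sum>i<m. \<sigma> i + (a Y i)^2)" for Y
  define B2 where "B2 Y = {z \<in> space N. 9/10 * T Y \<le> \<bar>(\<Sum>i<m. (z i + a Y i)^2) - T Y\<bar>}" for Y
  have B2s: "B2 Y \<in> sets N" for Y unfolding B2_def by measurable
  have Tge: "(\<Sum>i<m. \<sigma> i) \<le> T Y" for Y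
    unfolding T_def by (intro sum_mono) simp
  have sig_low: "Phi / (1 + 1/d) \<le> (\<Sum>i<m. \<sigma> i)" if bl: "bias th eta m < Phi / K"
  proof -
    have "Phi / K < Phi" using Phipos K10 by (simp add: divide_less_eq)
    then have PhiX: "Phi = (\<Sum>i<m. eps * Lam lam i)" using bl Phi sum_eq by (auto simp: max_def split: if_splits)
    have "Phi / (1 + 1/d) = (\<Sum>i<m. eps * Lam lam i / (1 + 1/d))"
      by (simp add: PhiX sum_divide_distrib)
    also have "\<dots> \<le> (\<Sum>i<m. \<sigma> i)"
      unfolding \<sigma>_def by (intro sum_mono pv_lower[OF eps lnz tp d] A2) auto
    finally show ?thesis .
  qed
  have Tpos: "0 < T Y" if "bias th eta m < Phi / K" for Y
    using sig_low[OF that] Tge[of Y] Phipos dd by (smt (verit) divide_pos_pos)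
  have mB2: "measure N (B2 Y) \<le> 5 * (1 + 1/d) * L / real m" if bl: "bias th eta m < Phi / K" for Y
  proof -
    have T0: "0 < T Y" by (rule Tpos[OF bl])
    have "measure N (B2 Y) \<le> (\<Sum>i<m. 1^2 * (2 * (sqrt (\<sigma> i))^4 + 4 * (sqrt (\<sigma> i))^2 * (0 - - a Y i)^2)) / (9/10 * T Y)^2"
      unfolding B2_def N_def
      using GC_inf[where M=Nf and m=m and mu="\<lambda>_. 0" and sg="\<lambda>i. sqrt (\<sigma> i)" and w="\<lambda>_. 1"
          and c="\<lambda>i. - a Y i" and t="9/10 * T Y", OF probNf setsNf Nfi sqrtsig] T0
      by (simp add: sqrt2 T_def)
    also have "\<dots> = (\<Sum>i<m. 2 * (\<sigma> i)^2 + 4 * \<sigma> i * (a Y i)^2) / (81/100 * (T Y)^2)"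
      using T0 by (simp add: sqrt4 sqrt2 power_mult_distrib power_divide field_simps)
    also have "\<dots> \<le> (4 * smax * T Y) / (81/100 * (T Y)^2)"
    proof (intro divide_right_mono)
      have "(\<Sum>i<m. 2 * (\<sigma> i)^2 + 4 * \<sigma> i * (a Y i)^2) \<le> (\<Sum>i<m. 4 * smax * (\<sigma> i + (a Y i)^2))"
      proof (intro sum_mono)
        fix i assume "i \<in> {..<m}"
        then have si: "\<sigma> i \<le> smax" using sig_smax by auto
        have "2 * (\<sigma> i)^2 \<le> 4 * smax * \<sigma> i"
          using si sig_pos[of i] by (simp add: power2_eq_square mult_right_mono)
        moreover have "4 * \<sigma> i * (a Y i)^2 \<le> 4 * smax * (a Y i)^2"
          using si by (intro mult_right_mono) auto
        ultimately show "2 * (\<sigma> i)^2 + 4 * \<sigma> i * (a Y i)^2 \<le> 4 * smax * (\<sigma> i + (a Y i)^2)"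
          by (simp add: algebra_simps)
      qed
      also have "\<dots> = 4 * smax * T Y" by (simp add: T_def sum_distrib_left)
      finally show "(\<Sum>i<m. 2 * (\<sigma> i)^2 + 4 * \<sigma> i * (a Y i)^2) \<le> 4 * smax * T Y" .
    qed simp
    also have "\<dots> = 400/81 * smax / T Y" using T0 by (simp add: power2_eq_square field_simps)
    also have "\<dots> \<le> 400/81 * smax / (Phi / (1 + 1/d))"
      using sig_low[OF bl] Tge[of Y] smax_pos Phipos dd T0 by (intro divide_left_mono) auto
    also have "\<dots> = 400/81 * (1 + 1/d) * L / real m"
      using Phipos dd d mpos by (simp add: smax_def field_simps)
    also have "\<dots> \<le> 5 * (1 + 1/d) * L / real m"
      using dd L mpos by (intro divide_right_mono mult_right_mono) auto
    finally show ?thesis .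
  qed
  define G where "G Y = {z \<in> space N. Q (shift Y z)}" for Y
  have Gs: "G Y \<in> sets N" for Y
  proof -
    have "shift Y -` Aset \<inter> space N \<in> sets N" by (rule measurable_sets[OF shift_meas Aset_sets])
    moreover have "shift Y -` Aset \<inter> space N = G Y" by (auto simp: G_def Aset_def spaceB)
    ultimately show ?thesis by simp
  qed
  have c0: "0 \<le> 25/2 * L / real m" "0 \<le> 5 * (1 + 1/d) * L / real m" using L dd mpos by auto
  have pw: "1 - 25/2 * L / real m - 5 * (1 + 1/d) * L / real m - indicator B3 Y \<le> f Y" for Y
  proof (cases "Y \<in> B3")
    case True
    then show ?thesis using f_ge0[of Y] c0 by simp
  next
    case False
    have UY: "U Y < 7/5 * Phi"
    proof -
      have "\<bar>U Y - (\<Sum>i<m. w i * eps)\<bar> < 2/5 * Phi" using False by (auto simp: B3_def spaceDD)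
      then show ?thesis using sumweps by linarith
    qed
    have sumu: "(\<Sum>i<m. (u Y i)^2) = U Y" by (simp add: U_def uw)
    have S0: "0 \<le> (\<Sum>i<m. (z i + a Y i)^2)" for z by (intro sum_nonneg) auto
    have up: "sqnorm (\<lambda>i. shift Y z i - th i) \<le> K * Phi"
      if zt: "\<forall>i. m \<le> i \<longrightarrow> z i = 0" and zB1: "z \<notin> B1" for z
    proof -
      have z1: "(\<Sum>i<m. (z i)^2) < 7/5 * Phi"
      proof -
        have "\<bar>(\<Sum>i<m. (z i)^2) - (\<Sum>i<m. \<sigma> i)\<bar> < 2/5 * Phi" using zB1 by (auto simp: B1_def spaceN)
        then show ?thesis using sumsig by linarith
      qed
      have "(\<Sum>i<m. (z i + a Y i)^2) \<le> (\<Sum>i<m. 3 * ((z i)^2 + (cdet i)^2 + (u Y i)^2))"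
        by (intro sum_mono) (simp add: a_split add.assoc[symmetric] sq3[of "z _" "cdet _" "u Y _"] del: distrib_left_numeral)
      also have "\<dots> = 3 * (\<Sum>i<m. (z i)^2) + 3 * (\<Sum>i<m. (cdet i)^2) + 3 * (\<Sum>i<m. (u Y i)^2)"
        by (simp add: sum.distrib sum_distrib_left)
      also have "\<dots> \<le> 9 * Phi" using z1 sum_cdet sumu UY by linarith
      finally have "(\<Sum>i<m. (z i + a Y i)^2) \<le> 9 * Phi" .
      then have "sqnorm (\<lambda>i. shift Y z i - th i) \<le> 10 * Phi" using sq_val[OF zt, of Y] bPhi by linarith
      also have "\<dots> \<le> K * Phi" using K10 Phipos by (intro mult_right_mono) auto
      finally show ?thesis .
    qed
    show ?thesis
    proof (cases "bias th eta m < Phi / K")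
      case False
      have "1 - measure N B1 - measure N {} \<le> measure N (G Y)"
      proof (rule prob_lb2[OF NP.prob_space_axioms Gs B1s])
        show "{} \<in> sets N" by simp
        show "AE z in N. z \<notin> B1 \<longrightarrow> z \<notin> {} \<longrightarrow> z \<in> G Y"
          using tail
        proof eventually_elim
          case (elim z)
          show ?case
          proof (intro impI)
            assume "z \<notin> B1"
            then have "sqnorm (\<lambda>i. shift Y z i - th i) \<le> K * Phi" using up elim by blast
            moreover have "Phi / K \<le> sqnorm (\<lambda>i. shift Y z i - th i)"
              using sq_val[OF elim, of Y] S0[of z] False by linarith
            ultimately show "z \<in> G Y" by (simp add: G_def Q_def spaceN)
          qed
        qed
      qed
      then have "1 - 25/2 * L / real m \<le> f Y" using mB1 by (simp add: f_def G_def)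
      then show ?thesis using c0 False by (simp add: \<open>Y \<notin> B3\<close>)
    next
      case True
      have "1 - measure N B1 - measure N (B2 Y) \<le> measure N (G Y)"
      proof (rule prob_lb2[OF NP.prob_space_axioms Gs B1s B2s])
        show "AE z in N. z \<notin> B1 \<longrightarrow> z \<notin> B2 Y \<longrightarrow> z \<in> G Y"
          using tail
        proof eventually_elim
          case (elim z)
          show ?case
          proof (intro impI)
            assume zB1: "z \<notin> B1" and zB2: "z \<notin> B2 Y"
            then have "sqnorm (\<lambda>i. shift Y z i - th i) \<le> K * Phi" using up elim by blast
            moreover have "Phi / K \<le> sqnorm (\<lambda>i. shift Y z i - th i)"
            proof -
              have "\<bar>(\<Sum>i<m. (z i + a Y i)^2) - T Y\<bar> < 9/10 * T Y" using zB2 by (auto simp: B2_def spaceN)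
              then have "T Y / 10 < (\<Sum>i<m. (z i + a Y i)^2)" by linarith
              moreover have "Phi / K \<le> T Y / 10"
              proof -
                have "Phi / K \<le> Phi / (10 * (1 + 1/d))" by (rule PhiK)
                also have "\<dots> = (Phi / (1 + 1/d)) / 10" by simp
                also have "\<dots> \<le> T Y / 10" using sig_low[OF True] Tge[of Y] by (intro divide_right_mono) auto
                finally show ?thesis .
              qed
              ultimately show ?thesis using sq_val[OF elim, of Y] b0 by linarith
            qed
            ultimately show "z \<in> G Y" by (simp add: G_def Q_def spaceN)
          qed
        qed
      qed
      then have "1 - 25/2 * L / real m - 5 * (1 + 1/d) * L / real m \<le> f Y"
        using mB1 mB2[OF True, of Y] by (simp add: f_def G_def)
      then show ?thesis by (simp add: \<open>Y \<notin> B3\<close>)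
    qed
  qed
  have int_f: "integrable DD f"
    by (rule DP.integrable_const_bound[where B=1]) (use f_le1 f_ge0 f_meas in auto)
  have mDD: "measure DD UNIV = 1" using DP.prob_space spaceDD by simp
  define c where "c = 1 - 25/2 * L / real m - 5 * (1 + 1/d) * L / real m"
  have int_g: "integrable DD (\<lambda>Y. c - indicator B3 Y)"
    using B3s by (intro Bochner_Integration.integrable_diff) (auto simp: DP.emeasure_eq_measure)
  have "(\<integral>Y. c - indicator B3 Y \<partial>DD) \<le> (\<integral>Y. f Y \<partial>DD)"
    using int_g int_f pw by (intro integral_mono) (auto simp: c_def)
  moreover have "(\<integral>Y. c - indicator B3 Y \<partial>DD) = c - measure DD B3"
    using B3s by (subst Bochner_Integration.integral_diff) (auto simp: DP.emeasure_eq_measure mDD spaceDD)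
  ultimately have "c - 25/2 * L / real m \<le> (\<integral>Y. f Y \<partial>DD)" using mB3 by linarith
  moreover have "c - 25/2 * L / real m = 1 - (25 * L + 5 * (1 + 1/d) * L) / real m"
    unfolding c_def using d mpos by (simp add: field_simps)
  moreover have "(\<integral>Y. f Y \<partial>DD) \<le> 1"
  proof -
    have "(\<integral>Y. f Y \<partial>DD) \<le> (\<integral>Y. 1 \<partial>DD)"
      using int_f f_le1 by (intro integral_mono) auto
    then show ?thesis by (simp add: DP.prob_space)
  qed
  ultimately show ?thesis using pcp by simp
qed

lemma Lam_pos: "lam i \<noteq> 0 \<Longrightarrow> 0 < Lam lam i"
  by (simp add: Lam_def)

lemma eps_mLamBar: "eps * real m * LamBar lam m = (\<Sum>i<m. eps * Lam lam i)"
proof (cases "m = 0")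
  case False
  then have "eps * real m * LamBar lam m = eps * (\<Sum>i<m. Lam lam i)" by (simp add: LamBar_def)
  then show ?thesis by (simp add: sum_distrib_left)
qed (simp add: LamBar_def)

lemma Phi_pos:
  assumes "0 < eps" "\<And>i. lam i \<noteq> 0" "1 \<le> m"
  shows "0 < Phi lam th eta eps m"
proof -
  have "0 < (\<Sum>i<m. eps * Lam lam i)"
    using assms Lam_pos by (intro sum_pos) (auto simp: lessThan_empty_iff)
  then show ?thesis by (simp add: Phi_def eps_mLamBar)
qed

lemma oracle_min:
  assumes eps: "0 < eps" and lnz: "\<And>i. lam i \<noteq> 0" and bdd: "\<exists>B. \<forall>i. \<bar>lam i\<bar> \<le> B"
  shows "1 \<le> oracle_dim lam th eta eps \<and>
    (\<forall>k\<ge>1. Phi lam th eta eps (oracle_dim lam th eta eps) \<le> Phi lam th eta eps k)"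
proof -
  obtain B where B: "\<And>i. \<bar>lam i\<bar> \<le> B" using bdd by auto
  have Bpos: "0 < B" using B[of 0] lnz[of 0] by linarith
  have Lamlow: "1 / B^2 \<le> Lam lam i" for i
  proof -
    have "(lam i)^2 \<le> B^2" using B[of i] by (metis abs_le_square_iff abs_of_pos Bpos power2_abs)
    then show ?thesis unfolding Lam_def using lnz[of i] Bpos by (intro divide_left_mono) auto
  qed
  let ?P = "Phi lam th eta eps"
  have grow: "eps * real k / B^2 \<le> ?P k" for k
  proof -
    have "eps * real k / B^2 = (\<Sum>i<k. eps * (1 / B^2))" by simp
    also have "\<dots> \<le> (\<Sum>i<k. eps * Lam lam i)"
      using Lamlow eps by (intro sum_mono mult_left_mono) auto
    also have "\<dots> \<le> ?P k" by (simp add: Phi_def eps_mLamBar)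
    finally show ?thesis .
  qed
  define N where "N = nat \<lceil>?P 1 * B^2 / eps\<rceil> + 1"
  have N1: "1 \<le> N" by (simp add: N_def)
  define v where "v = Min (?P ` {1..N})"
  have "v \<in> ?P ` {1..N}" unfolding v_def using N1 by (intro Min_in) auto
  then obtain m0 where m0: "m0 \<in> {1..N}" "?P m0 = v" by auto
  have vle: "v \<le> ?P k" if "k \<in> {1..N}" for k unfolding v_def using that by (intro Min_le) auto
  have m0min: "\<forall>k\<ge>1. ?P m0 \<le> ?P k"
  proof (intro allI impI)
    fix k :: nat assume k: "1 \<le> k"
    show "?P m0 \<le> ?P k"
    proof (cases "k \<le> N")
      case True then show ?thesis using m0 vle k by auto
    next
      case False
      then have "real N < real k" by simp
      moreover have "?P 1 * B^2 / eps < real N"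
        unfolding N_def using real_nat_ceiling_ge[of "?P 1 * B^2 / eps"] by linarith
      ultimately have "?P 1 * B^2 / eps < real k" by linarith
      then have "?P 1 < eps * real k / B^2" using eps Bpos by (simp add: field_simps)
      then have "?P 1 < ?P k" using grow[of k] by linarith
      moreover have "?P m0 \<le> ?P 1" using m0 vle[of 1] N1 by auto
      ultimately show ?thesis by linarith
    qed
  qed
  have ex: "\<exists>m. 1 \<le> m \<and> (\<forall>k\<ge>1. ?P m \<le> ?P k)" using m0 m0min by auto
  show ?thesis
    unfolding oracle_dim_def by (rule LeastI_ex[OF ex])
qed

lemma bias_tail:
  assumes s: "summable (\<lambda>i. (th i - eta i)^2)" and c: "0 < c"
  shows "\<exists>k\<ge>1. bias th eta k < c"
proof -
  have eq: "bias th eta k = sqnorm (\<lambda>i. th i - eta i) - (\<Sum>i<k. (th i - eta i)^2)" for k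
    unfolding bias_def sqnorm_def using suminf_split_initial_segment[OF s, of k] by simp
  have "(\<lambda>k. \<Sum>i<k. (th i - eta i)^2) \<longlonglongrightarrow> sqnorm (\<lambda>i. th i - eta i)"
    unfolding sqnorm_def by (rule summable_LIMSEQ[OF s])
  then have "(\<lambda>k. bias th eta k) \<longlonglongrightarrow> sqnorm (\<lambda>i. th i - eta i) - sqnorm (\<lambda>i. th i - eta i)"
    unfolding eq by (intro tendsto_diff tendsto_const)
  then have "eventually (\<lambda>k. bias th eta k < c) sequentially"
    using c by (intro order_tendstoD(2)) auto
  then obtain N where "\<And>k. N \<le> k \<Longrightarrow> bias th eta k < c" by (auto simp: eventually_sequentially)
  then show ?thesis by (intro exI[of _ "max N 1"]) auto
qed

lemma Phi_small:
  assumes lnz: "\<And>i. lam i \<noteq> 0" and bdd: "\<exists>B. \<forall>i. \<bar>lam i\<bar> \<le> B"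
    and s: "summable (\<lambda>i. (th i - eta i)^2)" and c: "0 < c"
  shows "eventually (\<lambda>eps. oracle_rate lam th eta eps \<le> c) (at_right 0)"
proof -
  obtain k where k: "1 \<le> k" "bias th eta k < c" using bias_tail[OF s c] by auto
  define X where "X = real k * LamBar lam k"
  have Xpos: "0 < X"
  proof -
    have "X = (\<Sum>i<k. 1 * Lam lam i)" unfolding X_def using eps_mLamBar[of 1 k lam] by simp
    also have "\<dots> > 0" using k(1) Lam_pos lnz by (intro sum_pos) (auto simp: lessThan_empty_iff)
    finally show ?thesis .
  qed
  have "eventually (\<lambda>eps. 0 < eps \<and> eps < c / X) (at_right 0)"
    unfolding eventually_at_right_field using c Xpos by (intro exI[of _ "c / X"]) auto
  then show ?thesis
  proof eventually_elim
    case (elim eps)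
    then have "eps * X < c" using Xpos by (simp add: field_simps)
    have "oracle_rate lam th eta eps \<le> Phi lam th eta eps k"
      using oracle_min[where eps=eps and lam=lam and th=th and eta=eta, OF _ lnz bdd] elim k unfolding oracle_rate_def by auto
    also have "\<dots> \<le> c" using \<open>eps * X < c\<close> k unfolding Phi_def X_def by (simp add: mult.assoc)
    finally show ?case .
  qed
qed

theorem mainTheorem7:
  fixes lam th eta :: "nat \<Rightarrow> real"
    and tau :: "real \<Rightarrow> nat \<Rightarrow> real"
    and d L :: real
  assumes lam_bdd: "\<exists>B. \<forall>i. \<bar>lam i\<bar> \<le> B"
    and lam_nz: "\<And>i. lam i \<noteq> 0"
    and th_l2: "summable (\<lambda>i. (th i)\<^sup>2)"
    and th_eta_l2: "summable (\<lambda>i. (th i - eta i)\<^sup>2)"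
    and tau_pos: "\<And>eps i. 0 < eps \<Longrightarrow> eps < 1 \<Longrightarrow> 0 < tau eps i"
    and d_pos: "0 < d"
    and assmA: "\<And>eps i. 0 < eps \<Longrightarrow> eps < 1 \<Longrightarrow> i < G_eps lam eps \<Longrightarrow>
                  d * max (sqrt eps * sqrt (Lam lam i)) (eps * Lam lam i) \<le> tau eps i"
    and L_ge1: "1 \<le> L"
    and L_bound: "\<And>eps. 0 < eps \<Longrightarrow> eps < 1 \<Longrightarrow>
                  eps * real (oracle_dim lam th eta eps) * LamMax lam (oracle_dim lam th eta eps)
                    / oracle_rate lam th eta eps \<le> L"
    and m_to_inf: "filterlim (\<lambda>eps. oracle_dim lam th eta eps) at_top (at_right 0)"
  shows "let K = 10 * max (1 + 1 / d) (sqnorm (\<lambda>i. th i - eta i) / d\<^sup>2) * L in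
         ((\<lambda>eps. post_conc_prob lam th eta (tau eps) eps (oracle_dim lam th eta eps)
                    (oracle_rate lam th eta eps / K) (K * oracle_rate lam th eta eps))
           \<longlongrightarrow> 1) (at_right 0)"
proof -
  define K where "K = 10 * max (1 + 1 / d) (sqnorm (\<lambda>i. th i - eta i) / d\<^sup>2) * L"
  define M where "M eps = oracle_dim lam th eta eps" for eps
  define P where "P eps = post_conc_prob lam th eta (tau eps) eps (M eps)
                    (oracle_rate lam th eta eps / K) (K * oracle_rate lam th eta eps)" for eps
  define R where "R = 25 * L + 5 * (1 + 1/d) * L"
  define sqn where "sqn = sqnorm (\<lambda>i. th i - eta i)"
  have L0: "0 < L" using L_ge1 by simp
  have Lam0: "0 < Lam lam 0" by (rule Lam_pos[OF lam_nz])
  have ev0: "eventually (\<lambda>eps. 0 < eps \<and> eps < 1) (at_right (0::real))"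
    unfolding eventually_at_right_field by (intro exI[of _ 1]) auto
  have evPhi: "eventually (\<lambda>eps. oracle_rate lam th eta eps \<le> Lam lam 0 / L) (at_right 0)"
    by (rule Phi_small[OF lam_nz lam_bdd th_eta_l2]) (use Lam0 L0 in simp)
  have evM: "eventually (\<lambda>eps. nat \<lceil>5 * L * sqn / d^2\<rceil> \<le> M eps) (at_right 0)"
    using m_to_inf unfolding M_def filterlim_at_top by blast
  have main: "eventually (\<lambda>eps. 1 - R / real (M eps) \<le> P eps \<and> P eps \<le> 1) (at_right 0)"
    using ev0 evPhi evM
  proof eventually_elim
    case (elim eps)
    have eps: "0 < eps" "eps < 1" using elim by auto
    define m where "m = M eps"
    define Phi0 where "Phi0 = oracle_rate lam th eta eps"
    have om: "1 \<le> m" using oracle_min[where eps=eps and lam=lam and th=th and eta=eta, OF eps(1) lam_nz lam_bdd]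
      by (simp add: m_def M_def)
    have mpos: "0 < real m" using om by simp
    have Phi0: "Phi0 = max (bias th eta m) (eps * real m * LamBar lam m)"
      by (simp add: Phi0_def oracle_rate_def Phi_def m_def M_def)
    have Phipos: "0 < Phi0" using Phi_pos[where th=th and eta=eta, OF eps(1) lam_nz om]
      by (simp add: Phi0_def oracle_rate_def m_def M_def)
    have LB: "eps * real m * LamMax lam m \<le> L * Phi0"
      using L_bound[OF eps] Phipos by (simp add: m_def M_def Phi0_def pos_divide_le_eq mult.commute)
    have LPhi: "L * Phi0 \<le> Lam lam 0" using elim L0 by (simp add: Phi0_def pos_le_divide_eq mult.commute)
    have LM0: "Lam lam 0 \<le> LamMax lam m" unfolding LamMax_def using om by (intro Max_ge) auto
    have LMpos: "0 < LamMax lam m" using LM0 Lam0 by simp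
    have c1: "eps * LamMax lam m \<le> Lam lam 0"
    proof -
      have "eps * LamMax lam m * 1 \<le> eps * LamMax lam m * real m"
        using om eps LMpos by (intro mult_left_mono) auto
      then show ?thesis using LB LPhi by (simp add: mult_ac)
    qed
    have c2: "m \<le> nat \<lfloor>1 / eps\<rfloor>"
    proof (rule le_nat_floor)
      have "eps * real m * Lam lam 0 \<le> eps * real m * LamMax lam m"
        using LM0 eps mpos by (intro mult_left_mono) auto
      then have "eps * real m * Lam lam 0 \<le> 1 * Lam lam 0" using LB LPhi by simp
      then have "eps * real m \<le> 1" using Lam0 by (simp only: mult_le_cancel_right)
      then show "real m \<le> 1 / eps" using eps by (simp add: field_simps)
    qed
    have mG: "m \<le> G_eps lam eps"
      unfolding G_eps_def
      by (rule Max_ge) (use om c1 c2 in \<open>auto intro: finite_subset[of _ "{..nat \<lfloor>1 / eps\<rfloor>}"]\<close>)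
    have A: "d * max (sqrt eps * sqrt (Lam lam i)) (eps * Lam lam i) \<le> tau eps i" if "i < m" for i
      using assmA[OF eps] that mG by auto
    have A1: "d * (sqrt eps * sqrt (Lam lam i)) \<le> tau eps i" if "i < m" for i
    proof -
      have "d * (sqrt eps * sqrt (Lam lam i)) \<le> d * max (sqrt eps * sqrt (Lam lam i)) (eps * Lam lam i)"
        using d_pos by (intro mult_left_mono) auto
      then show ?thesis using A[OF that] by linarith
    qed
    have A2: "d * (eps * Lam lam i) \<le> tau eps i" if "i < m" for i
    proof -
      have "d * (eps * Lam lam i) \<le> d * max (sqrt eps * sqrt (Lam lam i)) (eps * Lam lam i)"
        using d_pos by (intro mult_left_mono) auto
      then show ?thesis using A[OF that] by linarith
    qed
    have H5: "L * sqn / (d^2 * real m) \<le> 1/5"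
    proof -
      have "5 * L * sqn / d^2 \<le> real m"
        using elim real_nat_ceiling_ge[of "5 * L * sqn / d^2"] by (simp add: m_def)
      then have "5 * L * sqn \<le> d^2 * real m" using d_pos by (simp add: pos_divide_le_eq mult.commute)
      then show ?thesis using d_pos mpos by (simp add: pos_divide_le_eq)
    qed
    note mb = main_bound[where lam=lam and th=th and eta=eta and tau="tau eps" and eps=eps and d=d
        and L=L and Phi=Phi0 and K=K and m=m, OF eps(1) lam_nz tau_pos[OF eps] d_pos L_ge1 om th_eta_l2
        Phi0 LB A1 A2 H5[unfolded sqn_def] K_def]
    show ?case using mb by (simp add: P_def R_def m_def Phi0_def)
  qed
  have lim: "((\<lambda>eps. 1 - R / real (M eps)) \<longlongrightarrow> 1) (at_right 0)"
  proof -
    have "filterlim (\<lambda>eps. real (M eps)) at_top (at_right 0)"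
      using filterlim_compose[OF filterlim_real_sequentially m_to_inf] by (simp add: M_def)
    then have "((\<lambda>eps. R / real (M eps)) \<longlongrightarrow> 0) (at_right 0)"
      by (intro tendsto_divide_0[OF tendsto_const] filterlim_at_top_imp_at_infinity)
    then have "((\<lambda>eps. 1 - R / real (M eps)) \<longlongrightarrow> 1 - 0) (at_right 0)"
      by (intro tendsto_diff tendsto_const)
    then show ?thesis by simp
  qed
  have "(P \<longlongrightarrow> 1) (at_right 0)"
    by (rule tendsto_sandwich[OF _ _ lim tendsto_const]) (use main in \<open>auto elim: eventually_mono\<close>)
  then show ?thesis by (simp add: Let_def K_def[symmetric] P_def[abs_def] M_def)
qed

end
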